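(* Let $H$ be a connected, locally finite graph and let $S\subseteq\{0\}\times V(H)$ be a resolving set of $P_\infty\,\Box\, H$. Then for every $u\in V(H)$, the set $S\cup\{(1,u)\}$ is a resolving set of $P_{2\infty}\,\Box\, H$.
   Context: $P_\infty$ has vertex set $\mathbb N=\{0,1,2,\dots\}$ and $P_{2\infty}$ has vertex set $\mathbb Z$; in both, $i,j$ are adjacent iff $|i-j|=1$. The cartesian product $G\Box H$ has vertex set $V(G)\times V(H)$, where $(a,v)$ is adjacent to $(b,w)$ iff either $a=b$ and $vw\in E(H)$, or $v=w$ and $ab\in E(G)$; thus $d_{G\Box H}((a,v),(b,w))=d_G(a,b)+d_H(v,w)$. A vertex $x$ resolves $u,v$ if $d(u,x)\ne d(v,x)$; a set of vertices is a resolving set if every pair of distinct vertices is resolved by some vertex of it. *)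

theory Defs
  imports Main
begin

text \<open>A graph is given by a vertex set V and an adjacency relation E (only edges
between vertices of V matter).\<close>

definition simple_graph :: "'a set \<Rightarrow> ('a \<Rightarrow> 'a \<Rightarrow> bool) \<Rightarrow> bool" where
  "simple_graph V E \<longleftrightarrow> (\<forall>x y. E x y \<longrightarrow> x \<in> V \<and> y \<in> V \<and> E y x \<and> x \<noteq> y)"

definition walk :: "'a set \<Rightarrow> ('a \<Rightarrow> 'a \<Rightarrow> bool) \<Rightarrow> 'a list \<Rightarrow> bool" where
  "walk V E xs \<longleftrightarrow> xs \<noteq> [] \<and> set xs \<subseteq> V \<and>
     (\<forall>i. Suc i < length xs \<longrightarrow> E (xs ! i) (xs ! Suc i))"

definition connected_graph :: "'a set \<Rightarrow> ('a \<Rightarrow> 'a \<Rightarrow> bool) \<Rightarrow> bool" where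
  "connected_graph V E \<longleftrightarrow> V \<noteq> {} \<and>
     (\<forall>x\<in>V. \<forall>y\<in>V. \<exists>xs. walk V E xs \<and> hd xs = x \<and> last xs = y)"

definition locally_finite :: "'a set \<Rightarrow> ('a \<Rightarrow> 'a \<Rightarrow> bool) \<Rightarrow> bool" where
  "locally_finite V E \<longleftrightarrow> (\<forall>v\<in>V. finite {w\<in>V. E v w})"

definition gdist :: "'a set \<Rightarrow> ('a \<Rightarrow> 'a \<Rightarrow> bool) \<Rightarrow> 'a \<Rightarrow> 'a \<Rightarrow> nat" where
  "gdist V E x y = (LEAST n. \<exists>xs. walk V E xs \<and> hd xs = x \<and> last xs = y \<and> length xs = Suc n)"

definition resolving_set :: "'a set \<Rightarrow> ('a \<Rightarrow> 'a \<Rightarrow> bool) \<Rightarrow> 'a set \<Rightarrow> bool" where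
  "resolving_set V E S \<longleftrightarrow> S \<subseteq> V \<and>
     (\<forall>u\<in>V. \<forall>v\<in>V. u \<noteq> v \<longrightarrow> (\<exists>x\<in>S. gdist V E u x \<noteq> gdist V E v x))"

definition box_edge :: "('a \<Rightarrow> 'a \<Rightarrow> bool) \<Rightarrow> ('b \<Rightarrow> 'b \<Rightarrow> bool) \<Rightarrow> 'a \<times> 'b \<Rightarrow> 'a \<times> 'b \<Rightarrow> bool" where
  "box_edge E1 E2 p q \<longleftrightarrow>
     (fst p = fst q \<and> E2 (snd p) (snd q)) \<or> (snd p = snd q \<and> E1 (fst p) (fst q))"

definition path_edge :: "int \<Rightarrow> int \<Rightarrow> bool" where
  "path_edge i j \<longleftrightarrow> \<bar>i - j\<bar> = 1"

definition P_inf_V :: "int set" where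
  "P_inf_V = {i. 0 \<le> i}"

definition P_2inf_V :: "int set" where
  "P_2inf_V = UNIV"

end

theory Submission
  imports Defs
begin

definition reach :: "'a set \<Rightarrow> ('a \<Rightarrow> 'a \<Rightarrow> bool) \<Rightarrow> 'a \<Rightarrow> 'a \<Rightarrow> nat \<Rightarrow> bool" where
  "reach V E x y n \<longleftrightarrow> (\<exists>xs. walk V E xs \<and> hd xs = x \<and> last xs = y \<and> length xs = Suc n)"

lemma gdist_reach: "gdist V E x y = (LEAST n. reach V E x y n)"
  by (simp add: gdist_def reach_def)

lemma walk_Cons: "walk V E (x # xs) \<longleftrightarrow> x \<in> V \<and> (xs = [] \<or> (walk V E xs \<and> E x (hd xs)))"
proof (cases xs)
  case Nil
  then show ?thesis by (simp add: walk_def)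
next
  case (Cons y ys)
  have "(\<forall>i. Suc i < length (x # xs) \<longrightarrow> E ((x # xs) ! i) ((x # xs) ! Suc i)) \<longleftrightarrow>
        E x (hd xs) \<and> (\<forall>i. Suc i < length xs \<longrightarrow> E (xs ! i) (xs ! Suc i))"
    (is "?L \<longleftrightarrow> ?R")
  proof
    assume L: ?L
    have "E x (hd xs)" using L[rule_format, of 0] Cons by simp
    moreover have "\<forall>i. Suc i < length xs \<longrightarrow> E (xs ! i) (xs ! Suc i)"
      using L[rule_format, of "Suc _"] by simp
    ultimately show ?R by simp
  next
    assume R: ?R
    show ?L
    proof (intro allI impI)
      fix i assume "Suc i < length (x # xs)"
      then show "E ((x # xs) ! i) ((x # xs) ! Suc i)"
        using R Cons by (cases i) auto
    qed
  qed
  then show ?thesis using Cons by (auto simp: walk_def)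
qed

lemma reach_0: "reach V E x y 0 \<longleftrightarrow> x = y \<and> x \<in> V"
proof
  assume "reach V E x y 0"
  then obtain xs where "walk V E xs" "hd xs = x" "last xs = y" "length xs = 1"
    by (auto simp: reach_def)
  then show "x = y \<and> x \<in> V"
    by (cases xs) (auto simp: walk_def)
next
  assume "x = y \<and> x \<in> V"
  then show "reach V E x y 0"
    unfolding reach_def by (intro exI[of _ "[x]"]) (auto simp: walk_def)
qed

lemma reach_Suc: "reach V E x z (Suc n) \<longleftrightarrow> x \<in> V \<and> (\<exists>y. E x y \<and> reach V E y z n)"
proof
  assume "reach V E x z (Suc n)"
  then obtain xs where xs: "walk V E xs" "hd xs = x" "last xs = z" "length xs = Suc (Suc n)"
    by (auto simp: reach_def)
  then obtain ys where ys: "xs = x # ys" by (cases xs) auto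
  with xs have "ys \<noteq> []" by auto
  with xs ys walk_Cons[of V E x ys] have "x \<in> V" "walk V E ys" "E x (hd ys)" by auto
  moreover have "reach V E (hd ys) z n"
    unfolding reach_def using \<open>walk V E ys\<close> xs ys \<open>ys \<noteq> []\<close> by (intro exI[of _ ys]) auto
  ultimately show "x \<in> V \<and> (\<exists>y. E x y \<and> reach V E y z n)" by blast
next
  assume "x \<in> V \<and> (\<exists>y. E x y \<and> reach V E y z n)"
  then obtain y ys where "x \<in> V" "E x y" "walk V E ys" "hd ys = y" "last ys = z" "length ys = Suc n"
    by (auto simp: reach_def)
  then show "reach V E x z (Suc n)"
    unfolding reach_def
    by (intro exI[of _ "x # ys"]) (auto simp: walk_Cons)
qed

lemma reach_trans: "reach V E x y n \<Longrightarrow> reach V E y z m \<Longrightarrow> reach V E x z (n + m)"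
proof (induction n arbitrary: x)
  case 0
  then show ?case by (simp add: reach_0)
next
  case (Suc n)
  then show ?case by (auto simp: reach_Suc)
qed

lemma reach_in: "reach V E x y n \<Longrightarrow> x \<in> V"
  by (cases n) (auto simp: reach_0 reach_Suc)

lemma proj:
  assumes "simple_graph V E"
  shows "reach (A \<times> V) (box_edge path_edge E) p q n \<Longrightarrow>
     \<exists>m. reach V E (snd p) (snd q) m \<and> m + nat \<bar>fst p - fst q\<bar> \<le> n"
proof (induction n arbitrary: p)
  case 0
  then show ?case by (auto simp: reach_0)
next
  case (Suc n)
  then obtain y where p: "p \<in> A \<times> V" and b: "box_edge path_edge E p y"
    and r: "reach (A \<times> V) (box_edge path_edge E) y q n"
    by (auto simp: reach_Suc)
  from Suc.IH[OF r] obtain m where m: "reach V E (snd y) (snd q) m"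
    "m + nat \<bar>fst y - fst q\<bar> \<le> n" by blast
  from b consider "fst p = fst y" "E (snd p) (snd y)" | "snd p = snd y" "\<bar>fst p - fst y\<bar> = 1"
    by (auto simp: box_edge_def path_edge_def)
  then show ?case
  proof cases
    case 1
    have "reach V E (snd p) (snd q) (Suc m)" using p 1 m by (auto simp: reach_Suc)
    then show ?thesis using m 1 by (intro exI[of _ "Suc m"]) auto
  next
    case 2
    show ?thesis using m 2 by (intro exI[of _ m]) auto
  qed
qed

lemma lift_vert:
  "reach V E v w m \<Longrightarrow> a \<in> A \<Longrightarrow> reach (A \<times> V) (box_edge path_edge E) (a, v) (a, w) m"
proof (induction m arbitrary: v)
  case 0
  then show ?case by (auto simp: reach_0)
next
  case (Suc m)
  then obtain y where "v \<in> V" "E v y" "reach V E y w m" by (auto simp: reach_Suc)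
  with Suc show ?case
    by (auto simp: reach_Suc box_edge_def intro!: exI[of _ "(a, y)"])
qed

lemma horiz:
  assumes "\<forall>j. 0 \<le> j \<and> j \<le> int k \<longrightarrow> a + j \<in> A" and "w \<in> V"
  shows "reach (A \<times> V) (box_edge path_edge E) (a, w) (a + int k, w) k \<and>
         reach (A \<times> V) (box_edge path_edge E) (a + int k, w) (a, w) k"
  using assms(1)
proof (induction k)
  case 0
  then show ?case using assms(2) by (auto simp: reach_0)
next
  case (Suc k)
  then have IH: "reach (A \<times> V) (box_edge path_edge E) (a, w) (a + int k, w) k"
    "reach (A \<times> V) (box_edge path_edge E) (a + int k, w) (a, w) k" by auto
  have ak: "a + int k \<in> A" and ak1: "a + int (Suc k) \<in> A" using Suc.prems by auto
  have s1: "reach (A \<times> V) (box_edge path_edge E) (a + int k, w) (a + int (Suc k), w) 1"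
    using ak ak1 assms(2) by (simp add: reach_Suc reach_0 box_edge_def path_edge_def)
  have s2: "reach (A \<times> V) (box_edge path_edge E) (a + int (Suc k), w) (a + int k, w) 1"
    using ak ak1 assms(2) by (simp add: reach_Suc reach_0 box_edge_def path_edge_def)
  show ?case
    using reach_trans[OF IH(1) s1] reach_trans[OF s2 IH(2)] by simp
qed

lemma conn_reach:
  assumes "connected_graph V E" "v \<in> V" "w \<in> V"
  shows "\<exists>m. reach V E v w m"
proof -
  obtain xs where "walk V E xs" "hd xs = v" "last xs = w"
    using assms by (auto simp: connected_graph_def)
  then have "reach V E v w (length xs - 1)"
    unfolding reach_def by (intro exI[of _ xs]) (auto simp: walk_def)
  then show ?thesis by blast
qed

lemma dist_formula:
  assumes sg: "simple_graph V E" and cg: "connected_graph V E"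
    and conv: "\<forall>j. min a c \<le> j \<and> j \<le> max a c \<longrightarrow> j \<in> A"
    and v: "v \<in> V" and w: "w \<in> V"
  shows "gdist (A \<times> V) (box_edge path_edge E) (a, v) (c, w) = nat \<bar>a - c\<bar> + gdist V E v w"
proof -
  let ?B = "box_edge path_edge E"
  define d where "d = gdist V E v w"
  obtain m0 where "reach V E v w m0" using conn_reach[OF cg v w] by blast
  then have rd: "reach V E v w d" unfolding d_def gdist_reach by (rule LeastI)
  have aA: "a \<in> A" using conv by auto
  have r1: "reach (A \<times> V) ?B (a, v) (a, w) d" using lift_vert[OF rd aA] .
  have r2: "reach (A \<times> V) ?B (a, w) (c, w) (nat \<bar>a - c\<bar>)"
  proof (cases "a \<le> c")
    case True
    have "\<forall>j. 0 \<le> j \<and> j \<le> int (nat (c - a)) \<longrightarrow> a + j \<in> A" (is ?h) using conv True by auto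
    have e: "a + int (nat (c - a)) = c" "nat \<bar>a - c\<bar> = nat (c - a)" using True by auto
    from conjunct1[OF horiz[OF \<open>?h\<close> w, of E]] show ?thesis unfolding e .
  next
    case False
    have "\<forall>j. 0 \<le> j \<and> j \<le> int (nat (a - c)) \<longrightarrow> c + j \<in> A" (is ?h) using conv False by auto
    have e: "c + int (nat (a - c)) = a" "nat \<bar>a - c\<bar> = nat (a - c)" using False by auto
    from conjunct2[OF horiz[OF \<open>?h\<close> w, of E]] show ?thesis unfolding e .
  qed
  have r: "reach (A \<times> V) ?B (a, v) (c, w) (nat \<bar>a - c\<bar> + d)"
    using reach_trans[OF r1 r2] by (simp add: add.commute)
  have "(LEAST n. reach (A \<times> V) ?B (a, v) (c, w) n) = nat \<bar>a - c\<bar> + d"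
  proof (rule Least_equality)
    show "reach (A \<times> V) ?B (a, v) (c, w) (nat \<bar>a - c\<bar> + d)" by (rule r)
  next
    fix n assume "reach (A \<times> V) ?B (a, v) (c, w) n"
    from proj[OF sg this] obtain m where "reach V E v w m" "m + nat \<bar>a - c\<bar> \<le> n" by auto
    moreover have "d \<le> m" unfolding d_def gdist_reach by (rule Least_le) fact
    ultimately show "nat \<bar>a - c\<bar> + d \<le> n" by simp
  qed
  then show ?thesis unfolding gdist_reach d_def .
qed

theorem lemma8:
  fixes V :: "'a set" and E :: "'a \<Rightarrow> 'a \<Rightarrow> bool" and S :: "(int \<times> 'a) set" and u :: 'a
  assumes "simple_graph V E" and "connected_graph V E" and "locally_finite V E"
    and "S \<subseteq> {0} \<times> V"
    and "resolving_set (P_inf_V \<times> V) (box_edge path_edge E) S"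
    and "u \<in> V"
  shows "resolving_set (P_2inf_V \<times> V) (box_edge path_edge E) (S \<union> {(1, u)})"
proof -
  let ?B = "box_edge path_edge E"
  have dZ: "gdist (P_2inf_V \<times> V) ?B (a, v) (c, w) = nat \<bar>a - c\<bar> + gdist V E v w"
    if "v \<in> V" "w \<in> V" for a c v w
    by (rule dist_formula[OF assms(1,2) _ that]) (simp add: P_2inf_V_def)
  have dN: "gdist (P_inf_V \<times> V) ?B (a, v) (0, w) = nat a + gdist V E v w"
    if "v \<in> V" "w \<in> V" "0 \<le> a" for a v w
    using dist_formula[OF assms(1,2) _ that(1,2), where a=a and c=0 and A=P_inf_V] that(3)
    by (simp add: P_inf_V_def)
  have res: "\<forall>p\<in>P_inf_V \<times> V. \<forall>q\<in>P_inf_V \<times> V. p \<noteq> q \<longrightarrow> (\<exists>x\<in>S. gdist (P_inf_V \<times> V) ?B p x \<noteq> gdist (P_inf_V \<times> V) ?B q x)"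
    using assms(5) by (simp add: resolving_set_def)
  show ?thesis
    unfolding resolving_set_def
  proof (intro conjI ballI impI)
    show "S \<union> {(1, u)} \<subseteq> P_2inf_V \<times> V" using assms(4,6) by (auto simp: P_2inf_V_def)
  next
    fix p q assume p: "p \<in> P_2inf_V \<times> V" and q: "q \<in> P_2inf_V \<times> V" and pq: "p \<noteq> q"
    obtain a v where pe: "p = (a, v)" by (cases p)
    obtain b w where qe: "q = (b, w)" by (cases q)
    have v: "v \<in> V" and w: "w \<in> V" using p q pe qe by auto
    show "\<exists>x\<in>S \<union> {(1, u)}. gdist (P_2inf_V \<times> V) ?B p x \<noteq> gdist (P_2inf_V \<times> V) ?B q x"
    proof (cases "(\<bar>a\<bar>, v) = (\<bar>b\<bar>, w)")
      case True
      then have "v = w" "a = - b" "a \<noteq> 0" using pq pe qe by (auto simp: abs_if split: if_splits)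
      then show ?thesis using dZ[OF v assms(6)] dZ[OF w assms(6)] pe qe
        by (intro bexI[of _ "(1, u)"]) (auto simp: abs_if nat_eq_iff split: if_splits)
    next
      case False
      have "(\<bar>a\<bar>, v) \<in> P_inf_V \<times> V" "(\<bar>b\<bar>, w) \<in> P_inf_V \<times> V" using v w by (auto simp: P_inf_V_def)
      from res[rule_format, OF this False] obtain x where x: "x \<in> S"
        and ne: "gdist (P_inf_V \<times> V) ?B (\<bar>a\<bar>, v) x \<noteq> gdist (P_inf_V \<times> V) ?B (\<bar>b\<bar>, w) x" by blast
      from x assms(4) obtain s where xs: "x = (0, s)" "s \<in> V" by auto
      show ?thesis using ne xs dN[OF v xs(2)] dN[OF w xs(2)] dZ[OF v xs(2)] dZ[OF w xs(2)] pe qe x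
        by (intro bexI[of _ x]) auto
    qed
  qed
qed

end
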